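(* Let $K\subset\mathbb{R}^d$ be non-empty and compact, with $\beta=\dim_{\mathrm{L}} K$. Then there exists a weak tangent $F\in\operatorname{Tan}(K)$ such that $\mathcal{P}^\beta_0(F)\leq 257^\beta<\infty$. (In particular $\mathcal{P}^\beta(F)<\infty$.)
   Context: $B(x,r)$ denotes the closed ball; $N_r(F)$ is the minimal number of closed $r$-balls centred in $F$ covering $F$. Lower dimension: $\dim_{\mathrm{L}} K=\sup\{s>0:\exists C>0\ \forall 0<r\leq R<1\ \forall x\in K,\ N_r(B(x,R)\cap K)\geq C(R/r)^s\}$ (with $\sup\varnothing=0$). A weak tangent of $K$ is any limit in the Hausdorff metric of a sequence of non-empty sets $\lambda_n(K-x_n)\cap B(0,1)$ with $x_n\in K$, $\lambda_n\geq1$ and $\lambda_n\to\infty$; $\operatorname{Tan}(K)$ is the set of weak tangents. The $s$-dimensional packing pre-measure of $E\subset\mathbb{R}^d$ is $\mathcal{P}^s_0(E)=\lim_{\delta\to0}\sup\{\sum_i(2r_i)^s:\{B(x_i,r_i)\}_i\text{ pairwise disjoint, }r_i\leq\delta,\ x_i\in E\}$, and the packing measure is $\mathcal{P}^s(E)=\inf\{\sum_i\mathcal{P}^s_0(E_i):E\subset\bigcup_iE_i\}$. *)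

theory Defs
  imports "HOL-Analysis.Analysis"
begin

definition cover_num :: "real \<Rightarrow> 'a::euclidean_space set \<Rightarrow> nat" where
  "cover_num r F = Inf {card C | C. finite C \<and> C \<subseteq> F \<and> F \<subseteq> (\<Union>x\<in>C. cball x r)}"

definition lower_dim_set :: "'a::euclidean_space set \<Rightarrow> real set" where
  "lower_dim_set K = {s. s > 0 \<and> (\<exists>C>0. \<forall>r R. 0 < r \<and> r \<le> R \<and> R < 1 \<longrightarrow>
      (\<forall>x\<in>K. real (cover_num r (cball x R \<inter> K)) \<ge> C * (R / r) powr s))}"

definition lower_dim :: "'a::euclidean_space set \<Rightarrow> real" where
  "lower_dim K = (if lower_dim_set K = {} then 0 else Sup (lower_dim_set K))"

text \<open>Hausdorff distance (for non-empty bounded sets).\<close>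
definition hausdorff_dist :: "'a::euclidean_space set \<Rightarrow> 'a set \<Rightarrow> real" where
  "hausdorff_dist A B = max (SUP a\<in>A. infdist a B) (SUP b\<in>B. infdist b A)"

definition weak_tangents :: "'a::euclidean_space set \<Rightarrow> 'a set set" where
  "weak_tangents K = {F. compact F \<and> F \<noteq> {} \<and>
     (\<exists>(x::nat \<Rightarrow> 'a) (lam::nat \<Rightarrow> real).
        (\<forall>n. x n \<in> K \<and> lam n \<ge> 1 \<and>
             (\<lambda>y. lam n *\<^sub>R (y - x n)) ` K \<inter> cball 0 1 \<noteq> {}) \<and>
        filterlim lam at_top sequentially \<and>
        (\<lambda>n. hausdorff_dist ((\<lambda>y. lam n *\<^sub>R (y - x n)) ` K \<inter> cball 0 1) F) \<longlonglongrightarrow> 0)}"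

definition packing_sums :: "real \<Rightarrow> real \<Rightarrow> 'a::euclidean_space set \<Rightarrow> ennreal set" where
  "packing_sums s \<delta> E = {(\<Sum>\<^sub>\<infinity>p\<in>P. ennreal ((2 * snd p) powr s)) | P.
      countable P \<and> (\<forall>p\<in>P. fst p \<in> E \<and> 0 < snd p \<and> snd p \<le> \<delta>) \<and>
      (\<forall>p\<in>P. \<forall>q\<in>P. p \<noteq> q \<longrightarrow> cball (fst p) (snd p) \<inter> cball (fst q) (snd q) = {})}"

text \<open>Packing pre-measure: the limit as \<delta> \<rightarrow> 0 of the (monotone in \<delta>) suprema.\<close>
definition packing_premeasure :: "real \<Rightarrow> 'a::euclidean_space set \<Rightarrow> ennreal" where
  "packing_premeasure s E = Lim (at_right 0) (\<lambda>\<delta>. Sup (packing_sums s \<delta> E))"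

definition packing_measure :: "real \<Rightarrow> 'a::euclidean_space set \<Rightarrow> ennreal" where
  "packing_measure s E = Inf {(\<Sum>i. packing_premeasure s (Es i)) | Es :: nat \<Rightarrow> 'a set.
      E \<subseteq> (\<Union>i. Es i)}"

end

theory Submission
  imports Defs "HOL-Complex_Analysis.Great_Picard"
begin


lemma cball_disj_iff:
  fixes a b :: "'a::real_normed_vector"
  assumes "0 \<le> r" "0 \<le> s"
  shows "cball a r \<inter> cball b s = {} \<longleftrightarrow> r + s < dist a b"
proof
  assume d: "cball a r \<inter> cball b s = {}"
  show "r + s < dist a b"
  proof (rule ccontr)
    assume "\<not> r + s < dist a b"
    hence le: "dist a b \<le> r + s" by simp
    show False
    proof (cases "r + s = 0")
      case True
      then have "a = b" using le assms by simp
      moreover have "b \<in> cball b r \<inter> cball b s" using assms by simp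
      ultimately show False using d by blast
    next
      case False
      hence pos: "r + s > 0" using assms by simp
      define c where "c = a + (r / (r + s)) *\<^sub>R (b - a)"
      have "dist a c = (r / (r+s)) * dist a b"
        using pos assms by (simp add: c_def dist_norm norm_minus_commute)
      also have "\<dots> \<le> (r/(r+s)) * (r+s)"
        using le pos assms by (intro mult_left_mono) auto
      finally have 1: "dist a c \<le> r" using pos by simp
      have "b - c = (1 - r/(r+s)) *\<^sub>R (b - a)" by (simp add: c_def algebra_simps)
      also have "1 - r/(r+s) = s/(r+s)" using pos by (simp add: field_simps)
      finally have "dist b c = (s/(r+s)) * dist a b"
        using pos assms by (simp add: dist_norm norm_minus_commute)
      also have "\<dots> \<le> (s/(r+s)) * (r+s)"
        using le pos assms by (intro mult_left_mono) auto
      finally have 2: "dist b c \<le> s" using pos by simp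
      from 1 2 d show False by auto
    qed
  qed
next
  assume "r + s < dist a b"
  then show "cball a r \<inter> cball b s = {}" by (rule disjoint_cballI)
qed

definition pdisj :: "('a::real_normed_vector \<times> real) set \<Rightarrow> bool" where
  "pdisj Q \<longleftrightarrow> (\<forall>p\<in>Q. \<forall>q\<in>Q. p \<noteq> q \<longrightarrow> cball (fst p) (snd p) \<inter> cball (fst q) (snd q) = {})"

lemma cover_set_nonempty:
  fixes S :: "'a::euclidean_space set"
  assumes "compact S" "0 < r"
  shows "{card C | C. finite C \<and> C \<subseteq> S \<and> S \<subseteq> (\<Union>x\<in>C. cball x r)} \<noteq> {}"
proof -
  have "S \<subseteq> (\<Union>x\<in>S. ball x r)" using assms by auto
  then obtain C where "C \<subseteq> S" "finite C" "S \<subseteq> (\<Union>x\<in>C. ball x r)"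
    using compactE_image[OF assms(1), of S "\<lambda>x. ball x r"] by auto
  moreover have "(\<Union>x\<in>C. ball x r) \<subseteq> (\<Union>x\<in>C. cball x r)" by auto
  ultimately have "S \<subseteq> (\<Union>x\<in>C. cball x r)" by (meson subset_trans)
  hence "\<exists>C'. card C = card C' \<and> finite C' \<and> C' \<subseteq> S \<and> S \<subseteq> (\<Union>x\<in>C'. cball x r)"
    using \<open>C \<subseteq> S\<close> \<open>finite C\<close> by blast
  thus ?thesis by (simp add: set_eq_iff) metis
qed

lemma cover_num_ge:
  fixes S :: "'a::euclidean_space set"
  assumes "compact S" "0 < r" "finite Q" "pdisj Q"
    and Q: "\<And>p. p \<in> Q \<Longrightarrow> fst p \<in> S \<and> r \<le> snd p"
  shows "card Q \<le> cover_num r S"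
  unfolding cover_num_def
proof (rule cInf_greatest[OF cover_set_nonempty[OF assms(1,2)]])
  fix n assume "n \<in> {card C | C. finite C \<and> C \<subseteq> S \<and> S \<subseteq> (\<Union>x\<in>C. cball x r)}"
  then obtain C where C: "n = card C" "finite C" "C \<subseteq> S" "S \<subseteq> (\<Union>x\<in>C. cball x r)"
    unfolding mem_Collect_eq by metis
  have "\<forall>p\<in>Q. \<exists>c\<in>C. fst p \<in> cball c r"
  proof
    fix p assume "p \<in> Q"
    then have "fst p \<in> S" using Q by simp
    then show "\<exists>c\<in>C. fst p \<in> cball c r" using C(4) by (meson UN_E subsetD)
  qed
  then obtain g where g: "\<And>p. p \<in> Q \<Longrightarrow> g p \<in> C \<and> fst p \<in> cball (g p) r" by metis
  have "inj_on g Q"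
  proof (rule inj_onI)
    fix p q assume pq: "p \<in> Q" "q \<in> Q" "g p = g q"
    show "p = q"
    proof (rule ccontr)
      assume "p \<noteq> q"
      hence "cball (fst p) (snd p) \<inter> cball (fst q) (snd q) = {}"
        using assms(4) pq unfolding pdisj_def by blast
      moreover have "0 \<le> snd p" "0 \<le> snd q" using Q[OF pq(1)] Q[OF pq(2)] assms(2) by linarith+
      ultimately have "snd p + snd q < dist (fst p) (fst q)"
        using cball_disj_iff by blast
      moreover have "dist (g p) (fst p) \<le> r" "dist (g p) (fst q) \<le> r"
        using g[OF pq(1)] g[OF pq(2)] pq(3) by auto
      moreover have "dist (fst p) (fst q) \<le> dist (g p) (fst p) + dist (g p) (fst q)"
        using dist_triangle[of "fst p" "fst q" "g p"] by (simp add: dist_commute)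
      moreover have "r \<le> snd p" "r \<le> snd q" using Q[OF pq(1)] Q[OF pq(2)] by auto
      ultimately show False by linarith
    qed
  qed
  then have "card Q \<le> card C" using g C by (intro card_inj_on_le) auto
  then show "card Q \<le> n" using C by simp
qed

lemma cover_num_le:
  fixes S :: "'a::euclidean_space set"
  assumes "finite E" "E \<subseteq> S" "S \<subseteq> (\<Union>e\<in>E. cball e r)"
  shows "cover_num r S \<le> card E"
  unfolding cover_num_def
proof (rule cInf_lower)
  show "card E \<in> {card C | C. finite C \<and> C \<subseteq> S \<and> S \<subseteq> (\<Union>x\<in>C. cball x r)}"
    using assms unfolding mem_Collect_eq by metis
  show "bdd_below {card C | C. finite C \<and> C \<subseteq> S \<and> S \<subseteq> (\<Union>x\<in>C. cball x r)}"
    by (rule bdd_belowI[of _ 0]) simp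
qed

lemma sep_card_bound:
  fixes E :: "'a::euclidean_space set"
  assumes "finite E" "E \<subseteq> cball x R" "0 < r" "0 \<le> R"
    and sep: "\<And>a b. a \<in> E \<Longrightarrow> b \<in> E \<Longrightarrow> a \<noteq> b \<Longrightarrow> r < dist a b"
  shows "real (card E) * (r/2) ^ DIM('a) \<le> (R + r/2) ^ DIM('a)"
proof -
  let ?w = "unit_ball_vol (real DIM('a))"
  have w: "?w > 0" by simp
  have disj: "disjoint_family_on (\<lambda>e. ball e (r/2)) E"
    unfolding disjoint_family_on_def
  proof (intro ballI impI)
    fix a b assume ab: "a \<in> E" "b \<in> E" "a \<noteq> b"
    show "ball a (r/2) \<inter> ball b (r/2) = {}"
    proof (rule ccontr)
      assume "ball a (r/2) \<inter> ball b (r/2) \<noteq> {}"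
      then obtain z where "dist a z < r/2" "dist b z < r/2" by auto
      hence "dist a b < r" using dist_triangle[of a b z] by (simp add: dist_commute)
      with sep[OF ab] show False by simp
    qed
  qed
  have "(\<Sum>e\<in>E. emeasure lborel (ball e (r/2))) = emeasure lborel (\<Union>e\<in>E. ball e (r/2))"
    by (rule sum_emeasure) (use disj assms in auto)
  also have "\<dots> \<le> emeasure lborel (ball x (R + r/2))"
  proof (rule emeasure_mono)
    show "(\<Union>e\<in>E. ball e (r/2)) \<subseteq> ball x (R + r/2)"
    proof
      fix z assume "z \<in> (\<Union>e\<in>E. ball e (r/2))"
      then obtain e where "e \<in> E" "dist e z < r/2" by auto
      moreover have "dist x e \<le> R" using \<open>e \<in> E\<close> assms(2) by auto
      ultimately show "z \<in> ball x (R + r/2)" using dist_triangle[of x z e] by simp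
    qed
  qed auto
  finally have 1: "(\<Sum>e\<in>E. ennreal (?w * (r/2) ^ DIM('a))) \<le> emeasure lborel (ball x (R + r/2))"
    using assms(3) by (simp add: emeasure_ball)
  have 2: "emeasure lborel (ball x (R + r/2)) = ennreal (?w * (R + r/2) ^ DIM('a))"
    using assms by (intro emeasure_ball) simp
  have 3: "(\<Sum>e\<in>E. ennreal (?w * (r/2) ^ DIM('a))) = ennreal (\<Sum>e\<in>E. ?w * (r/2) ^ DIM('a))"
    by (rule sum_ennreal) (use w assms(3) in simp)
  have 4: "(\<Sum>e\<in>E. ?w * (r/2) ^ DIM('a)) = real (card E) * (?w * (r/2) ^ DIM('a))"
    by simp
  have "ennreal (real (card E) * (?w * (r/2) ^ DIM('a))) \<le> ennreal (?w * (R + r/2) ^ DIM('a))"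
    using 1 2 3 4 by metis
  hence "real (card E) * (?w * (r/2) ^ DIM('a)) \<le> ?w * (R + r/2) ^ DIM('a)"
    by (rule ennreal_le_iff[THEN iffD1, rotated]) (use w assms in simp)
  hence "?w * (real (card E) * (r/2) ^ DIM('a)) \<le> ?w * (R + r/2) ^ DIM('a)"
    by (simp add: algebra_simps)
  then show ?thesis using w by (rule mult_left_le_imp_le) 
qed



lemma cover_num_upper:
  fixes S :: "'a::euclidean_space set"
  assumes "S \<subseteq> cball x R" "0 < r" "0 \<le> R"
  shows "real (cover_num r S) \<le> ((R + r/2)/(r/2)) ^ DIM('a)"
proof -
  define P where "P E \<longleftrightarrow> finite E \<and> E \<subseteq> S \<and> (\<forall>a\<in>E. \<forall>b\<in>E. a \<noteq> b \<longrightarrow> r < dist a b)" for E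
  define B where "B = ((R + r/2)/(r/2)) ^ DIM('a)"
  have bound: "real (card E) \<le> B" if "P E" for E
  proof -
    have "real (card E) * (r/2) ^ DIM('a) \<le> (R + r/2) ^ DIM('a)"
      using that assms by (intro sep_card_bound[of E x R r]) (auto simp: P_def)
    moreover have "(r/2) ^ DIM('a) > 0" using assms by simp
    ultimately have "real (card E) \<le> (R + r/2) ^ DIM('a) / (r/2) ^ DIM('a)"
      by (simp add: field_simps)
    then show ?thesis unfolding B_def power_divide .
  qed
  have "P {}" by (simp add: P_def)
  moreover have "\<forall>E. P E \<longrightarrow> card E < nat \<lceil>B\<rceil> + 1"
  proof (intro allI impI)
    fix E assume "P E"
    then have "real (card E) \<le> B" by (rule bound)
    then have "card E \<le> nat \<lceil>B\<rceil>" by linarith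
    then show "card E < nat \<lceil>B\<rceil> + 1" by simp
  qed
  ultimately obtain E0 where E0: "P E0" "\<And>E. P E \<Longrightarrow> card E \<le> card E0"
    using ex_has_greatest_nat[of P "{}" card "nat \<lceil>B\<rceil> + 1"] by metis
  have cov: "S \<subseteq> (\<Union>e\<in>E0. cball e r)"
  proof
    fix y assume y: "y \<in> S"
    show "y \<in> (\<Union>e\<in>E0. cball e r)"
    proof (rule ccontr)
      assume "y \<notin> (\<Union>e\<in>E0. cball e r)"
      then have far: "\<forall>e\<in>E0. r < dist e y" by (simp add: not_le)
      then have "y \<notin> E0" using assms(2) by fastforce
      have "P (insert y E0)"
        using E0(1) far y unfolding P_def by (auto simp: dist_commute)
      then have "card (insert y E0) \<le> card E0" by (rule E0(2))
      moreover have "card (insert y E0) = card E0 + 1"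
        using \<open>y \<notin> E0\<close> E0(1) by (simp add: P_def)
      ultimately show False by simp
    qed
  qed
  have "cover_num r S \<le> card E0"
    using E0(1) cov by (intro cover_num_le) (auto simp: P_def)
  then have "real (cover_num r S) \<le> real (card E0)" by simp
  also have "\<dots> \<le> B" using bound E0(1) by simp
  finally show ?thesis by (simp add: B_def)
qed

lemma lower_dim_set_le_DIM:
  fixes K :: "'a::euclidean_space set"
  assumes "compact K" "K \<noteq> {}" "s \<in> lower_dim_set K"
  shows "s \<le> real DIM('a)"
proof (rule ccontr)
  assume "\<not> s \<le> real DIM('a)"
  define d where "d = real DIM('a)"
  define t where "t = s - d"
  have t: "t > 0" using \<open>\<not> s \<le> real DIM('a)\<close> by (simp add: t_def d_def)
  from assms(3) obtain C where s0: "s > 0" and C: "C > 0"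
    and H: "\<And>r R x. 0 < r \<Longrightarrow> r \<le> R \<Longrightarrow> R < 1 \<Longrightarrow> x \<in> K \<Longrightarrow>
           real (cover_num r (cball x R \<inter> K)) \<ge> C * (R / r) powr s"
    unfolding lower_dim_set_def by blast
  obtain x where x: "x \<in> K" using assms(2) by blast
  define y where "y = C / (2 * 2 powr (s + d))"
  have y: "y > 0" using C by (simp add: y_def)
  define r where "r = min (1/2) (y powr (1/t))"
  have r: "0 < r" "r \<le> 1/2" using y by (auto simp: r_def)
  have "r powr t \<le> (y powr (1/t)) powr t"
    using r t y by (intro powr_mono2) (auto simp: r_def)
  also have "\<dots> = y" using t y by (simp add: powr_powr)
  finally have rt: "r powr t \<le> y" .
  have low: "C * ((1/2) / r) powr s \<le> real (cover_num r (cball x (1/2) \<inter> K))"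
    using H[of r "1/2" x] r x by simp
  have "real (cover_num r (cball x (1/2) \<inter> K)) \<le> ((1/2 + r/2)/(r/2)) ^ DIM('a)"
    using r by (intro cover_num_upper[of _ x "1/2"]) auto
  also have "\<dots> \<le> (2/r) ^ DIM('a)"
  proof (rule power_mono)
    show "(1/2 + r/2)/(r/2) \<le> 2/r" using r by (simp add: field_simps)
  qed (use r in simp)
  also have "\<dots> = (2/r) powr d" using r by (simp add: d_def powr_realpow)
  finally have up: "C * ((1/2) / r) powr s \<le> (2/r) powr d" using low by linarith
  have "((1/2) / r) powr s = 1 / (2 powr s * r powr s)"
    using r by (simp add: powr_divide powr_mult)
  moreover have "(2/r) powr d = 2 powr d / r powr d" using r by (simp add: powr_divide)
  ultimately have "C / (2 powr s * r powr s) \<le> 2 powr d / r powr d" using up by simp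
  hence "C * r powr d \<le> 2 powr d * (2 powr s * r powr s)"
    using r by (simp add: field_simps)
  moreover have "r powr s = r powr t * r powr d" using r by (simp add: t_def flip: powr_add)
  ultimately have "C * r powr d \<le> (2 powr d * 2 powr s * r powr t) * r powr d" by (simp add: algebra_simps)
  hence "C \<le> 2 powr d * 2 powr s * r powr t" using r by simp
  also have "\<dots> \<le> 2 powr d * 2 powr s * y" using rt by simp
  also have "\<dots> = C / 2" using C by (simp add: y_def powr_add)
  finally show False using C by simp
qed

lemma lower_dim_set_bdd:
  fixes K :: "'a::euclidean_space set"
  assumes "compact K" "K \<noteq> {}"
  shows "bdd_above (lower_dim_set K)"
  using lower_dim_set_le_DIM[OF assms] by (intro bdd_aboveI) blast

lemma lower_dim_upper:
  fixes K :: "'a::euclidean_space set"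
  assumes "compact K" "K \<noteq> {}" "s \<in> lower_dim_set K"
  shows "s \<le> lower_dim K"
  using assms lower_dim_set_bdd[OF assms(1,2)] unfolding lower_dim_def
  by (auto intro: cSup_upper)

lemma lower_dim_nonneg:
  fixes K :: "'a::euclidean_space set"
  assumes "compact K" "K \<noteq> {}"
  shows "0 \<le> lower_dim K"
proof (cases "lower_dim_set K = {}")
  case True then show ?thesis by (simp add: lower_dim_def)
next
  case False
  then obtain s where "s \<in> lower_dim_set K" by blast
  then have "s \<le> lower_dim K" "s > 0" using lower_dim_upper[OF assms] by (auto simp: lower_dim_set_def)
  then show ?thesis by simp
qed




definition rich :: "'a::euclidean_space set \<Rightarrow> real \<Rightarrow> real \<Rightarrow> 'a \<Rightarrow> real \<Rightarrow> bool" where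
  "rich K b T y u \<longleftrightarrow> (\<exists>Q. finite Q \<and> pdisj Q \<and>
      (\<forall>p\<in>Q. fst p \<in> K \<and> fst p \<in> cball y u \<and> u / T \<le> snd p \<and> snd p \<le> u) \<and>
      (\<Sum>p\<in>Q. (snd p / u) powr b) > 4 powr b)"

lemma rich_sum:
  fixes b u :: real and Q :: "('a::real_normed_vector \<times> real) set"
  assumes "0 \<le> b" "0 < u" "finite Q"
    and Q: "\<And>p. p \<in> Q \<Longrightarrow> 0 < snd p"
    and S: "(\<Sum>p\<in>Q. (snd p / u) powr b) > 4 powr b"
  shows "(if b = 0 then 2 else (4/3) powr b) * u powr b \<le> (\<Sum>p\<in>Q. (snd p / 3) powr b)"
proof (cases "b = 0")
  case True
  have "(\<Sum>p\<in>Q. (snd p / u) powr b) = (\<Sum>p\<in>Q. 1)"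
  proof (rule sum.cong[OF refl])
    fix p assume "p \<in> Q"
    then have "snd p > 0" by (rule Q)
    then show "(snd p / u) powr b = 1" using True assms(2) by simp
  qed
  hence "(\<Sum>p\<in>Q. (snd p / u) powr b) = real (card Q)" by simp
  with S True have "card Q \<ge> 2" by simp
  moreover have "(\<Sum>p\<in>Q. (snd p / 3) powr b) = (\<Sum>p\<in>Q. 1)"
  proof (rule sum.cong[OF refl])
    fix p assume "p \<in> Q"
    then have "snd p > 0" by (rule Q)
    then show "(snd p / 3) powr b = 1" using True assms(2) by simp
  qed
  ultimately show ?thesis using True assms(2) by simp
next
  case False
  have eq: "(snd p / 3) powr b = (u/3) powr b * (snd p / u) powr b" if "p \<in> Q" for p
  proof -
    have e: "snd p / 3 = (u/3) * (snd p / u)" using assms(2) by simp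
    have "(snd p / 3) powr b = ((u/3) * (snd p / u)) powr b" using arg_cong[OF e, of "\<lambda>x. x powr b"] .
    also have "\<dots> = (u/3) powr b * (snd p / u) powr b"
      by (rule powr_mult)
    finally show ?thesis .
  qed
  have "(\<Sum>p\<in>Q. (snd p / 3) powr b) = (u/3) powr b * (\<Sum>p\<in>Q. (snd p / u) powr b)"
    using eq by (simp add: sum_distrib_left)
  also have "\<dots> \<ge> (u/3) powr b * 4 powr b"
    using S assms(2) by (intro mult_left_mono) auto
  finally have "(u/3) powr b * 4 powr b \<le> (\<Sum>p\<in>Q. (snd p / 3) powr b)" .
  moreover have "(u/3) powr b * 4 powr b = (4/3) powr b * u powr b"
    using assms(2) by (simp add: powr_mult[symmetric] powr_divide mult.commute)
  ultimately show ?thesis using False by simp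
qed

lemma rich_induct:
  fixes K :: "'a::euclidean_space set" and b T R0 c1 \<theta> \<gamma> :: real
  assumes b: "0 \<le> b" and T: "1 \<le> T"
    and allrich: "\<And>y u. y \<in> K \<Longrightarrow> 0 < u \<Longrightarrow> u < R0 \<Longrightarrow> rich K b T y u"
    and \<gamma>: "\<gamma> = (if b = 0 then 2 else (4/3) powr b)"
    and \<theta>: "\<theta> = ln \<gamma> / ln (3*T)"
    and c1: "c1 = 3 powr (-(b+\<theta>))"
  shows "y \<in> K \<Longrightarrow> 0 < u \<Longrightarrow> u < R0 \<Longrightarrow> 0 < r \<Longrightarrow> r \<le> u \<Longrightarrow> u < 3^n * r \<Longrightarrow>
    \<exists>Q. finite Q \<and> pdisj Q \<and>
      (\<forall>p\<in>Q. fst p \<in> K \<and> cball (fst p) (snd p) \<subseteq> cball y (2*u) \<and> r/(3*T) \<le> snd p \<and> snd p \<le> r) \<and>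
      c1 * u powr b * (u/r) powr \<theta> \<le> (\<Sum>p\<in>Q. snd p powr b)"
proof (induction n arbitrary: y u r)
  case 0
  then show ?case by simp
next
  case (Suc n)
  have \<gamma>1: "\<gamma> > 1" using b by (auto simp: \<gamma>)
  have T3: "3 * T > 1" using T by simp
  have \<theta>0: "\<theta> > 0" using \<gamma>1 T3 by (simp add: \<theta>)
  have pow\<theta>: "(3*T) powr \<theta> = \<gamma>"
  proof -
    have "(3*T) powr \<theta> = exp (\<theta> * ln (3*T))" using T3 by (simp add: powr_def)
    also have "\<theta> * ln (3*T) = ln \<gamma>" using T3 by (simp add: \<theta>)
    finally show ?thesis using \<gamma>1 by simp
  qed
  have "3 powr (-(b+\<theta>)) \<le> 3 powr 0" using b \<theta>0 by (intro powr_mono) auto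
  hence c1le: "c1 \<le> 1" by (simp add: c1)
  have c1pos: "c1 > 0" by (simp add: c1)
  show ?case
  proof (cases "u/3 < r")
    case True
    let ?Q = "{(y, r)}"
    have "c1 * u powr b * (u/r) powr \<theta> \<le> r powr b"
    proof -
      have "u powr b \<le> (3 * r) powr b" using Suc.prems True b by (intro powr_mono2) auto
      moreover have "(u/r) powr \<theta> \<le> 3 powr \<theta>"
        using Suc.prems True \<theta>0 by (intro powr_mono2) (auto simp: field_simps)
      ultimately have "c1 * u powr b * (u/r) powr \<theta> \<le> c1 * (3*r) powr b * 3 powr \<theta>"
        using c1pos by (intro mult_mono mult_left_mono) auto
      also have "\<dots> = (3 powr (-(b+\<theta>)) * 3 powr b * 3 powr \<theta>) * r powr b"
        using Suc.prems by (simp add: c1 powr_mult)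
      also have "3 powr (-(b+\<theta>)) * 3 powr b * 3 powr \<theta> = 1"
        by (simp flip: powr_add)
      finally show ?thesis by simp
    qed
    moreover have "cball y r \<subseteq> cball y (2*u)" using Suc.prems by auto
    moreover have "r/(3*T) \<le> r" using Suc.prems T by (simp add: field_simps)
    ultimately show ?thesis using Suc.prems
      by (intro exI[of _ ?Q]) (auto simp: pdisj_def)
  next
    case False
    hence r3: "r \<le> u/3" by simp
    from allrich[OF Suc.prems(1-3)] obtain Q0 where Q0: "finite Q0" "pdisj Q0"
      "\<And>p. p \<in> Q0 \<Longrightarrow> fst p \<in> K \<and> fst p \<in> cball y u \<and> u / T \<le> snd p \<and> snd p \<le> u"
      "(\<Sum>p\<in>Q0. (snd p / u) powr b) > 4 powr b"
      unfolding rich_def by blast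
    have sp: "0 < snd p" if "p \<in> Q0" for p
    proof -
      have "0 < u / T" using Suc.prems T by simp
      then show ?thesis using Q0(3)[OF that] by linarith
    qed
    define X where "X = (u/(3*T*r)) powr \<theta>"
    have child: "\<exists>Q'. finite Q' \<and> pdisj Q' \<and>
      (\<forall>q\<in>Q'. fst q \<in> K \<and> cball (fst q) (snd q) \<subseteq> cball (fst p) (snd p) \<and> r/(3*T) \<le> snd q \<and> snd q \<le> r) \<and>
      c1 * (snd p / 3) powr b * X \<le> (\<Sum>q\<in>Q'. snd q powr b)" if p: "p \<in> Q0" for p
    proof (cases "r \<le> snd p / 3")
      case True
      have "snd p / 3 < 3^n * r" using Suc.prems(6) Q0(3)[OF p] by simp
      moreover have "snd p / 3 < R0" using Q0(3)[OF p] Suc.prems by simp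
      ultimately obtain Q' where Q': "finite Q'" "pdisj Q'"
        "\<forall>q\<in>Q'. fst q \<in> K \<and> cball (fst q) (snd q) \<subseteq> cball (fst p) (2*(snd p/3)) \<and> r/(3*T) \<le> snd q \<and> snd q \<le> r"
        "c1 * (snd p/3) powr b * ((snd p/3)/r) powr \<theta> \<le> (\<Sum>q\<in>Q'. snd q powr b)"
        using Suc.IH[of "fst p" "snd p / 3" r] Q0(3)[OF p] sp[OF p] True Suc.prems by auto
      have "cball (fst p) (2*(snd p/3)) \<subseteq> cball (fst p) (snd p)" using sp[OF p] by auto
      moreover have "X \<le> ((snd p/3)/r) powr \<theta>"
        unfolding X_def using Q0(3)[OF p] T Suc.prems \<theta>0
        by (intro powr_mono2) (auto simp: field_simps)
      ultimately show ?thesis using Q' c1pos sp[OF p]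
        by (intro exI[of _ Q']) (auto intro: order_trans[OF _ Q'(4)] mult_left_mono)
    next
      case False
      let ?Q = "{(fst p, snd p / 3)}"
      have "X \<le> 1"
      proof -
        have "u / T \<le> snd p" using Q0(3)[OF p] by simp
        hence "u \<le> T * snd p" using T by (simp add: field_simps)
        also have "T * snd p \<le> T * (3*r)" using False T by (intro mult_left_mono) auto
        finally have "u/(3*T*r) \<le> 1" using T Suc.prems by (simp add: field_simps)
        then show ?thesis unfolding X_def using Suc.prems T \<theta>0 by (intro powr_le1) auto
      qed
      hence "c1 * X \<le> 1" using c1le c1pos mult_le_one[of c1 X] by (simp add: X_def)
      hence "(snd p / 3) powr b * (c1 * X) \<le> (snd p / 3) powr b * 1"
        by (intro mult_left_mono) auto
      hence "c1 * (snd p / 3) powr b * X \<le> (snd p / 3) powr b" by (simp add: algebra_simps)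
      moreover have "r/(3*T) \<le> snd p / 3"
      proof -
        have "u / T \<le> snd p" using Q0(3)[OF p] by simp
        moreover have "r / T \<le> u / T" using Suc.prems T by (simp add: divide_right_mono)
        ultimately show ?thesis by simp
      qed
      moreover have "cball (fst p) (snd p / 3) \<subseteq> cball (fst p) (snd p)" using sp[OF p] by auto
      ultimately show ?thesis using False Q0(3)[OF p]
        by (intro exI[of _ ?Q]) (auto simp: pdisj_def)
    qed
    then obtain Qf where Qf: "\<And>p. p \<in> Q0 \<Longrightarrow> finite (Qf p) \<and> pdisj (Qf p) \<and>
      (\<forall>q\<in>Qf p. fst q \<in> K \<and> cball (fst q) (snd q) \<subseteq> cball (fst p) (snd p) \<and> r/(3*T) \<le> snd q \<and> snd q \<le> r) \<and>
      c1 * (snd p / 3) powr b * X \<le> (\<Sum>q\<in>Qf p. snd q powr b)"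
      by metis
    define Q where "Q = (\<Union>p\<in>Q0. Qf p)"
    have qpos: "0 < snd q" if "q \<in> Qf p" "p \<in> Q0" for p q
    proof -
      have "0 < r/(3*T)" using Suc.prems T by simp
      then show ?thesis using Qf[OF that(2)] that(1) by force
    qed
    have disjQ: "Qf p \<inter> Qf p' = {}" if "p \<in> Q0" "p' \<in> Q0" "p \<noteq> p'" for p p'
    proof (rule ccontr)
      assume "Qf p \<inter> Qf p' \<noteq> {}"
      then obtain q where q: "q \<in> Qf p" "q \<in> Qf p'" by blast
      have "fst q \<in> cball (fst q) (snd q)" using qpos[OF q(1) that(1)] by simp
      hence "fst q \<in> cball (fst p) (snd p) \<inter> cball (fst p') (snd p')"
        using Qf[OF that(1)] Qf[OF that(2)] q by blast
      moreover have "cball (fst p) (snd p) \<inter> cball (fst p') (snd p') = {}"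
        using Q0(2) that unfolding pdisj_def by blast
      ultimately show False by simp
    qed
    have "finite Q" using Q0(1) Qf by (simp add: Q_def)
    moreover have "pdisj Q"
      unfolding pdisj_def
    proof (intro ballI impI)
      fix q q' assume qq: "q \<in> Q" "q' \<in> Q" "q \<noteq> q'"
      then obtain p p' where pp: "p \<in> Q0" "q \<in> Qf p" "p' \<in> Q0" "q' \<in> Qf p'" by (auto simp: Q_def)
      show "cball (fst q) (snd q) \<inter> cball (fst q') (snd q') = {}"
      proof (cases "p = p'")
        case True
        then show ?thesis using Qf[OF pp(1)] pp qq(3) unfolding pdisj_def by blast
      next
        case False
        have "cball (fst p) (snd p) \<inter> cball (fst p') (snd p') = {}"
          using Q0(2) pp False unfolding pdisj_def by blast
        moreover have "cball (fst q) (snd q) \<subseteq> cball (fst p) (snd p)"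
          using Qf[OF pp(1)] pp(2) by blast
        moreover have "cball (fst q') (snd q') \<subseteq> cball (fst p') (snd p')"
          using Qf[OF pp(3)] pp(4) by blast
        ultimately show ?thesis by blast
      qed
    qed
    moreover have "\<forall>q\<in>Q. fst q \<in> K \<and> cball (fst q) (snd q) \<subseteq> cball y (2*u) \<and> r/(3*T) \<le> snd q \<and> snd q \<le> r"
    proof
      fix q assume "q \<in> Q"
      then obtain p where p: "p \<in> Q0" "q \<in> Qf p" by (auto simp: Q_def)
      have "cball (fst p) (snd p) \<subseteq> cball y (2*u)"
      proof
        fix z assume "z \<in> cball (fst p) (snd p)"
        then have "dist (fst p) z \<le> snd p" by simp
        moreover have "dist y (fst p) \<le> u" "snd p \<le> u" using Q0(3)[OF p(1)] by auto
        ultimately show "z \<in> cball y (2*u)" using dist_triangle[of y z "fst p"] by simp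
      qed
      then show "fst q \<in> K \<and> cball (fst q) (snd q) \<subseteq> cball y (2*u) \<and> r/(3*T) \<le> snd q \<and> snd q \<le> r"
        using Qf[OF p(1)] p(2) by blast
    qed
    moreover have "c1 * u powr b * (u/r) powr \<theta> \<le> (\<Sum>q\<in>Q. snd q powr b)"
    proof -
      have "(\<Sum>q\<in>Q. snd q powr b) = (\<Sum>p\<in>Q0. (\<Sum>q\<in>Qf p. snd q powr b))"
        unfolding Q_def using Q0(1) Qf disjQ by (intro sum.UNION_disjoint) auto
      also have "\<dots> \<ge> (\<Sum>p\<in>Q0. c1 * (snd p / 3) powr b * X)"
        using Qf by (intro sum_mono) blast
      finally have 1: "(\<Sum>p\<in>Q0. c1 * (snd p / 3) powr b * X) \<le> (\<Sum>q\<in>Q. snd q powr b)" .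
      have 2: "(\<Sum>p\<in>Q0. c1 * (snd p / 3) powr b * X) = c1 * X * (\<Sum>p\<in>Q0. (snd p / 3) powr b)"
        by (simp add: sum_distrib_left algebra_simps)
      have 3: "\<gamma> * u powr b \<le> (\<Sum>p\<in>Q0. (snd p / 3) powr b)"
        unfolding \<gamma> using rich_sum[OF b Suc.prems(2) Q0(1) sp Q0(4)] by simp
      have X0: "X \<ge> 0" by (simp add: X_def)
      have 4: "c1 * X * (\<gamma> * u powr b) \<le> c1 * X * (\<Sum>p\<in>Q0. (snd p / 3) powr b)"
        using 3 c1pos X0 by (intro mult_left_mono) auto
      have "X = (u/r) powr \<theta> / \<gamma>"
      proof -
        have e: "u/(3*T*r) = (u/r) / (3*T)" by simp
        have "X = ((u/r) / (3*T)) powr \<theta>" unfolding X_def using arg_cong[OF e, of "\<lambda>x. x powr \<theta>"] .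
        also have "\<dots> = (u/r) powr \<theta> / (3*T) powr \<theta>" by (rule powr_divide)
        finally have "X = (u/r) powr \<theta> / (3*T) powr \<theta>" .
        then show ?thesis using pow\<theta> by simp
      qed
      hence "c1 * X * (\<gamma> * u powr b) = c1 * u powr b * (u/r) powr \<theta>" using \<gamma>1 by simp
      then show ?thesis using 1 2 4 by linarith
    qed
    ultimately show ?thesis by blast
  qed
qed



lemma allrich_lower_dim:
  fixes K :: "'a::euclidean_space set" and b T R0 :: real
  assumes K: "compact K" and b: "0 \<le> b" and T: "1 \<le> T" and R0: "0 < R0"
    and allrich: "\<And>y u. y \<in> K \<Longrightarrow> 0 < u \<Longrightarrow> u < R0 \<Longrightarrow> rich K b T y u"
  shows "b + ln (if b = 0 then 2 else (4/3) powr b) / ln (3*T) \<in> lower_dim_set K"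
proof -
  define \<gamma> where "\<gamma> = (if b = 0 then 2 else (4/3) powr b)"
  define \<theta> where "\<theta> = ln \<gamma> / ln (3*T)"
  define c1 where "c1 = 3 powr (-(b+\<theta>))"
  define s where "s = b + \<theta>"
  define m where "m = min 1 R0"
  define C where "C = c1 * (m/(6*T)) powr s"
  have \<gamma>1: "\<gamma> > 1" using b by (auto simp: \<gamma>_def)
  have T3: "3 * T > 1" using T by simp
  have \<theta>0: "\<theta> > 0" using \<gamma>1 T3 by (simp add: \<theta>_def)
  have s0: "s > 0" using b \<theta>0 by (simp add: s_def)
  have "3 powr (-(b+\<theta>)) \<le> 3 powr 0" using b \<theta>0 by (intro powr_mono) auto
  hence c1le: "c1 \<le> 1" by (simp add: c1_def)
  have c1pos: "c1 > 0" by (simp add: c1_def)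
  have m: "0 < m" "m \<le> 1" "m \<le> R0" using R0 by (auto simp: m_def)
  have Cpos: "C > 0" using c1pos m T by (simp add: C_def)
  have IND: "\<And>n y u r. y \<in> K \<Longrightarrow> 0 < u \<Longrightarrow> u < R0 \<Longrightarrow> 0 < r \<Longrightarrow> r \<le> u \<Longrightarrow> u < 3^n * r \<Longrightarrow>
    \<exists>Q. finite Q \<and> pdisj Q \<and>
      (\<forall>p\<in>Q. fst p \<in> K \<and> cball (fst p) (snd p) \<subseteq> cball y (2*u) \<and> r/(3*T) \<le> snd p \<and> snd p \<le> r) \<and>
      c1 * u powr b * (u/r) powr \<theta> \<le> (\<Sum>p\<in>Q. snd p powr b)"
    by (rule rich_induct[OF b T allrich \<gamma>_def \<theta>_def c1_def]) auto
  have main: "C * (R / r) powr s \<le> real (cover_num r (cball x R \<inter> K))"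
    if rR: "0 < r" "r \<le> R" "R < 1" and x: "x \<in> K" for r R x
  proof -
    define S where "S = cball x R \<inter> K"
    have Sc: "compact S" unfolding S_def using K by (intro closed_Int_compact) auto
    define u where "u = min R R0 / 2"
    have u: "0 < u" "u < R0" "2*u \<le> R" using rR R0 by (auto simp: u_def)
    have uR: "m * R / 2 \<le> u"
    proof -
      have "m * R \<le> R" using m rR by (simp add: mult_left_le_one_le)
      moreover have "m * R \<le> R0" using m rR by (meson less_eq_real_def less_le_trans mult_left_le mult_le_cancel_left1 not_le)
      ultimately show ?thesis by (simp add: u_def)
    qed
    show ?thesis
    proof (cases "3*T*r \<le> u")
      case True
      define r1 where "r1 = 3*T*r"
      have r1: "0 < r1" "r1 \<le> u" using True rR T by (auto simp: r1_def)
      obtain n where n: "u / r1 < 3^n" using real_arch_pow[of 3 "u/r1"] by auto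
      hence "u < 3^n * r1" using r1 by (simp add: field_simps)
      then obtain Q where Q: "finite Q" "pdisj Q"
        "\<forall>p\<in>Q. fst p \<in> K \<and> cball (fst p) (snd p) \<subseteq> cball x (2*u) \<and> r1/(3*T) \<le> snd p \<and> snd p \<le> r1"
        "c1 * u powr b * (u/r1) powr \<theta> \<le> (\<Sum>p\<in>Q. snd p powr b)"
        using IND[OF x u(1,2) r1(1,2)] by blast
      have r1r: "r1/(3*T) = r" using T by (simp add: r1_def)
      have cardQ: "card Q \<le> cover_num r S"
      proof (rule cover_num_ge[OF Sc rR(1) Q(1,2)])
        fix p assume p: "p \<in> Q"
        have "r \<le> snd p" using Q(3) p r1r by auto
        hence "fst p \<in> cball (fst p) (snd p)" using rR by simp
        hence "fst p \<in> cball x R" using Q(3) p u(3) by fastforce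
        then show "fst p \<in> S \<and> r \<le> snd p" using Q(3) p \<open>r \<le> snd p\<close> by (simp add: S_def)
      qed
      have "(\<Sum>p\<in>Q. snd p powr b) \<le> (\<Sum>p\<in>Q. r1 powr b)"
      proof (rule sum_mono)
        fix p assume p: "p \<in> Q"
        have "r \<le> snd p" using Q(3) p r1r by auto
        then show "snd p powr b \<le> r1 powr b" using Q(3) p b rR by (intro powr_mono2) auto
      qed
      also have "\<dots> = real (card Q) * r1 powr b" by simp
      finally have "c1 * u powr b * (u/r1) powr \<theta> \<le> real (card Q) * r1 powr b" using Q(4) by linarith
      moreover have "c1 * u powr b * (u/r1) powr \<theta> = c1 * (u/r1) powr s * r1 powr b"
      proof -
        have "u powr b = (u/r1) powr b * r1 powr b" using r1 by (simp add: powr_divide)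
        moreover have "(u/r1) powr s = (u/r1) powr b * (u/r1) powr \<theta>" by (simp add: s_def powr_add)
        ultimately show ?thesis by (simp add: algebra_simps)
      qed
      ultimately have "c1 * (u/r1) powr s * r1 powr b \<le> real (card Q) * r1 powr b" by simp
      hence A: "c1 * (u/r1) powr s \<le> real (card Q)" using r1 by simp
      have "(m/(6*T)) * (R/r) \<le> u / r1"
        using uR rR T by (simp add: r1_def field_simps)
      hence "((m/(6*T)) * (R/r)) powr s \<le> (u/r1) powr s" using s0 m T rR by (intro powr_mono2) auto
      moreover have "((m/(6*T)) * (R/r)) powr s = (m/(6*T)) powr s * (R/r) powr s" by (rule powr_mult)
      ultimately have "(m/(6*T)) powr s * (R/r) powr s \<le> (u/r1) powr s" by simp
      hence "C * (R/r) powr s \<le> c1 * (u/r1) powr s"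
        using c1pos by (simp add: C_def mult.assoc)
      also have "\<dots> \<le> real (card Q)" by (rule A)
      also have "\<dots> \<le> real (cover_num r S)" using cardQ by simp
      finally show ?thesis by (simp add: S_def)
    next
      case False
      have "x \<in> S" using x rR by (simp add: S_def)
      hence "card {(x, r)} \<le> cover_num r S"
        using rR by (intro cover_num_ge[OF Sc rR(1)]) (auto simp: pdisj_def)
      hence one: "1 \<le> real (cover_num r S)" by simp
      have "(m/(6*T)) * (R/r) \<le> 1"
        using uR rR T False by (simp add: field_simps)
      hence "((m/(6*T)) * (R/r)) powr s \<le> 1" using m T rR s0 by (intro powr_le1) auto
      moreover have "((m/(6*T)) * (R/r)) powr s = (m/(6*T)) powr s * (R/r) powr s" by (rule powr_mult)
      ultimately have "(m/(6*T)) powr s * (R/r) powr s \<le> 1" by simp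
      hence "C * (R/r) powr s \<le> c1" using c1pos by (simp add: C_def mult.assoc)
      also have "\<dots> \<le> 1" by (rule c1le)
      finally show ?thesis using one by (simp add: S_def)
    qed
  qed
  have "s \<in> lower_dim_set K"
    unfolding lower_dim_set_def using s0 Cpos main by blast
  then show ?thesis by (simp add: s_def \<theta>_def \<gamma>_def)
qed

lemma poor_exists:
  fixes K :: "'a::euclidean_space set" and T R0 :: real
  assumes K: "compact K" "K \<noteq> {}" and T: "1 \<le> T" and R0: "0 < R0"
  shows "\<exists>y\<in>K. \<exists>u. 0 < u \<and> u < R0 \<and> \<not> rich K (lower_dim K) T y u"
proof (rule ccontr)
  assume "\<not> ?thesis"
  hence allrich: "\<And>y u. y \<in> K \<Longrightarrow> 0 < u \<Longrightarrow> u < R0 \<Longrightarrow> rich K (lower_dim K) T y u" by blast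
  define b where "b = lower_dim K"
  have b: "0 \<le> b" unfolding b_def by (rule lower_dim_nonneg[OF K])
  define \<theta> where "\<theta> = ln (if b = 0 then 2 else (4/3) powr b) / ln (3*T)"
  have "(if b = 0 then 2 else (4/3) powr b) > (1::real)" using b by auto
  hence \<theta>0: "\<theta> > 0" using T by (simp add: \<theta>_def)
  have "b + \<theta> \<in> lower_dim_set K"
    unfolding \<theta>_def by (rule allrich_lower_dim[OF K(1) b T R0]) (use allrich in \<open>simp add: b_def\<close>)
  hence "b + \<theta> \<le> b" unfolding b_def by (rule lower_dim_upper[OF K])
  with \<theta>0 show False by simp
qed




lemma hd_le:
  fixes A F :: "'a::euclidean_space set"
  assumes "A \<noteq> {}" "F \<noteq> {}" "\<And>a. a \<in> A \<Longrightarrow> infdist a F \<le> e" "\<And>y. y \<in> F \<Longrightarrow> infdist y A \<le> e"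
  shows "hausdorff_dist A F \<le> e" "0 \<le> hausdorff_dist A F"
proof -
  show "hausdorff_dist A F \<le> e"
    unfolding hausdorff_dist_def using assms by (auto intro!: cSUP_least)
  obtain a where a: "a \<in> A" using assms(1) by blast
  have "bdd_above ((\<lambda>a. infdist a F) ` A)" using assms(3) by (intro bdd_aboveI) auto
  hence "infdist a F \<le> (SUP a\<in>A. infdist a F)" using a by (rule cSUP_upper[rotated])
  hence "0 \<le> (SUP a\<in>A. infdist a F)" using infdist_nonneg[of a F] by linarith
  then show "0 \<le> hausdorff_dist A F" unfolding hausdorff_dist_def by simp
qed

lemma blaschke:
  fixes A :: "nat \<Rightarrow> 'a::euclidean_space set"
  assumes cA: "\<And>n. compact (A n)" and neA: "\<And>n. A n \<noteq> {}" and sA: "\<And>n. A n \<subseteq> cball 0 1"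
  obtains k F where "strict_mono k" "compact F" "F \<noteq> {}" "F \<subseteq> cball 0 1"
    "(\<lambda>n. hausdorff_dist (A (k n)) F) \<longlonglongrightarrow> 0"
proof -
  define S :: "'a set" where "S = cball 0 1"
  define f where "f n y = infdist y (A n)" for n y
  have bnd: "norm (f n x) \<le> 2" if "x \<in> S" for n x
  proof -
    obtain a where a: "a \<in> A n" using neA by blast
    have "f n x \<le> dist x a" unfolding f_def using a by (rule infdist_le)
    also have "\<dots> \<le> norm x + norm a" by (simp add: dist_norm norm_triangle_ineq4)
    also have "\<dots> \<le> 2" using that a sA[of n] by (auto simp: S_def)
    finally show ?thesis using infdist_nonneg[of x "A n"] by (simp add: f_def)
  qed
  have eqc: "\<exists>d. 0 < d \<and> (\<forall>n y. y \<in> S \<and> norm (x - y) < d \<longrightarrow> norm (f n x - f n y) < e)"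
    if "x \<in> S" "0 < e" for x e
  proof (intro exI conjI allI impI)
    show "0 < e" by fact
    fix n y assume "y \<in> S \<and> norm (x - y) < e"
    then show "norm (f n x - f n y) < e"
      using infdist_triangle_abs[of x "A n" y] by (simp add: f_def dist_norm)
  qed
  have cS: "compact S" by (simp add: S_def)
  obtain g :: "'a \<Rightarrow> real" and k :: "nat \<Rightarrow> nat" where g: "continuous_on S g" and k: "strict_mono k"
    and conv0: "\<forall>e>0. \<exists>N. \<forall>n x. n \<ge> N \<and> x \<in> S \<longrightarrow> norm (f (k n) x - g x) < e"
  proof (rule Arzela_Ascoli[OF cS bnd eqc])
    fix g :: "'a \<Rightarrow> real" and k :: "nat \<Rightarrow> nat"
    assume a: "continuous_on S g" "strict_mono k"
      "\<And>e. 0 < e \<Longrightarrow> \<exists>N. \<forall>n x. n \<ge> N \<and> x \<in> S \<longrightarrow> norm (f (k n) x - g x) < e"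
    show thesis
      apply (rule that)
      apply (rule a(1))
      apply (rule a(2))
      using a(3) by blast
  qed
  have conv: "\<exists>N. \<forall>n x. n \<ge> N \<and> x \<in> S \<longrightarrow> norm (f (k n) x - g x) < e" if "0 < e" for e
    using conv0 that by blast
  have g0: "0 \<le> g x" if "x \<in> S" for x
  proof (rule ccontr)
    assume "\<not> 0 \<le> g x"
    then obtain N where "\<forall>n x'. n \<ge> N \<and> x' \<in> S \<longrightarrow> norm (f (k n) x' - g x') < - g x"
      using conv[of "- g x"] by auto
    hence "norm (f (k N) x - g x) < - g x" using that by blast
    moreover have "f (k N) x \<ge> 0" by (simp add: f_def infdist_nonneg)
    ultimately show False by simp
  qed
  define F where "F = {x \<in> S. g x = 0}"
  have FS: "F \<subseteq> cball 0 1" by (auto simp: F_def S_def)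
  have cF: "compact F"
  proof -
    have "closed F" unfolding F_def using g by (intro continuous_closed_preimage_constant) (auto simp: S_def)
    moreover have "bounded F" using FS by (rule bounded_subset[OF bounded_cball])
    ultimately show ?thesis by (simp add: compact_eq_bounded_closed)
  qed
  have small: "\<exists>x\<in>S. g x < e" if e0: "e > 0" for e
  proof -
    obtain N where N: "\<forall>n x. n \<ge> N \<and> x \<in> S \<longrightarrow> norm (f (k n) x - g x) < e" using conv[OF e0] by blast
    obtain a where a: "a \<in> A (k N)" using neA by blast
    have aS: "a \<in> S" using a sA[of "k N"] sA[of "k n"] by (auto simp: S_def subset_iff)
    have "f (k N) a = 0" using a by (simp add: f_def)
    then have "g a < e" using N aS by force
    then show ?thesis using aS by blast
  qed
  have neF: "F \<noteq> {}"
  proof -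
    obtain x0 where x0: "x0 \<in> S" "\<And>y. y \<in> S \<Longrightarrow> g x0 \<le> g y"
      using continuous_attains_inf[of S g] g by (auto simp: S_def)
    have "g x0 \<le> 0"
    proof (rule ccontr)
      assume "\<not> g x0 \<le> 0"
      then obtain x where "x \<in> S" "g x < g x0" using small[of "g x0"] by auto
      with x0 show False by force
    qed
    then have "x0 \<in> F" using g0[OF x0(1)] x0(1) by (simp add: F_def)
    then show ?thesis by blast
  qed
  have lim: "(\<lambda>n. hausdorff_dist (A (k n)) F) \<longlonglongrightarrow> 0"
  proof (rule LIMSEQ_I)
    fix \<eta> :: real assume \<eta>: "0 < \<eta>"
    define C where "C = {y. \<eta> / 2 \<le> infdist y F} \<inter> S"
    have cC: "compact C"
      unfolding C_def S_def
      by (intro closed_Int_compact compact_cball closed_Collect_le continuous_intros)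
    have "\<exists>\<epsilon>>0. \<forall>y\<in>C. \<epsilon> \<le> g y"
    proof (cases "C = {}")
      case True then show ?thesis by (intro exI[of _ 1]) auto
    next
      case False
      have gC: "continuous_on C g" using g by (rule continuous_on_subset) (auto simp: C_def)
      obtain y0 where y0: "y0 \<in> C" "\<And>y. y \<in> C \<Longrightarrow> g y0 \<le> g y"
        using continuous_attains_inf[OF cC False gC] by auto
      have "g y0 > 0"
      proof (rule ccontr)
        assume "\<not> g y0 > 0"
        hence "g y0 = 0" using g0[of y0] y0(1) by (auto simp: C_def)
        hence "y0 \<in> F" using y0(1) by (auto simp: C_def F_def)
        hence "infdist y0 F = 0" by simp
        thus False using y0(1) \<eta> by (auto simp: C_def)
      qed
      then show ?thesis using y0 by blast
    qed
    then obtain \<epsilon> where \<epsilon>: "\<epsilon> > 0" "\<And>y. y \<in> C \<Longrightarrow> \<epsilon> \<le> g y" by blast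
    obtain N where N: "\<forall>n x. n \<ge> N \<and> x \<in> S \<longrightarrow> norm (f (k n) x - g x) < min \<epsilon> (\<eta>/2)"
      using conv[of "min \<epsilon> (\<eta>/2)"] \<epsilon> \<eta> by auto
    show "\<exists>N. \<forall>n\<ge>N. norm (hausdorff_dist (A (k n)) F - 0) < \<eta>"
    proof (intro exI allI impI)
      fix n assume n: "N \<le> n"
      have 1: "infdist a F \<le> \<eta>/2" if a: "a \<in> A (k n)" for a
      proof -
        have aS: "a \<in> S" using a sA[of "k N"] sA[of "k n"] by (auto simp: S_def subset_iff)
        have "f (k n) a = 0" using a by (simp add: f_def)
        hence "g a < \<epsilon>" using N n aS by force
        hence "a \<notin> C" using \<epsilon>(2) by force
        thus ?thesis using aS by (auto simp: C_def)
      qed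
      have 2: "infdist y (A (k n)) \<le> \<eta>/2" if y: "y \<in> F" for y
      proof -
        have "y \<in> S" "g y = 0" using y by (auto simp: F_def)
        hence "norm (f (k n) y) < \<eta>/2" using N n by force
        thus ?thesis by (simp add: f_def)
      qed
      have "hausdorff_dist (A (k n)) F \<le> \<eta>/2" "0 \<le> hausdorff_dist (A (k n)) F"
        using hd_le[OF neA neF 1 2] by auto
      then show "norm (hausdorff_dist (A (k n)) F - 0) < \<eta>" using \<eta> by simp
    qed
  qed
  show thesis using that[OF k cF neF FS lim] .
qed




lemma poor_scaled:
  fixes K :: "'a::euclidean_space set"
  assumes nr: "\<not> rich K b T x R" and R: "0 < R" and T: "0 < T"
    and Q: "finite Q" "pdisj Q"
    "\<And>p. p \<in> Q \<Longrightarrow> fst p \<in> (\<lambda>y. (1/R) *\<^sub>R (y - x)) ` K \<inter> cball 0 1 \<and> 1/T \<le> snd p \<and> snd p \<le> 1"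
  shows "(\<Sum>p\<in>Q. snd p powr b) \<le> 4 powr b"
proof -
  define h where "h p = (x + R *\<^sub>R fst p, R * snd p)" for p :: "'a \<times> real"
  have inj: "inj_on h Q"
  proof (rule inj_onI)
    fix p q assume "p \<in> Q" "q \<in> Q" "h p = h q"
    then have "R *\<^sub>R fst p = R *\<^sub>R fst q" "R * snd p = R * snd q" by (auto simp: h_def)
    then have "fst p = fst q" "snd p = snd q" using R by auto
    then show "p = q" by (simp add: prod_eq_iff)
  qed
  have sp: "0 < snd p" if "p \<in> Q" for p
  proof -
    have "0 < 1/T" using T by simp
    then show ?thesis using Q(3)[OF that] by linarith
  qed
  have fin: "finite (h ` Q)" using Q(1) by simp
  have pd: "pdisj (h ` Q)"
    unfolding pdisj_def
  proof (intro ballI impI)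
    fix hp hq assume a: "hp \<in> h ` Q" "hq \<in> h ` Q" "hp \<noteq> hq"
    then obtain p q where pq: "p \<in> Q" "q \<in> Q" "hp = h p" "hq = h q" by blast
    then have "p \<noteq> q" using a by auto
    then have "cball (fst p) (snd p) \<inter> cball (fst q) (snd q) = {}" using Q(2) pq unfolding pdisj_def by blast
    then have "snd p + snd q < dist (fst p) (fst q)"
      using cball_disj_iff[of "snd p" "snd q" "fst p" "fst q"] sp[OF pq(1)] sp[OF pq(2)] by simp
    then have "R * (snd p + snd q) < R * dist (fst p) (fst q)" using R by simp
    moreover have "dist (x + R *\<^sub>R fst p) (x + R *\<^sub>R fst q) = R * dist (fst p) (fst q)"
    proof -
      have "dist (x + R *\<^sub>R fst p) (x + R *\<^sub>R fst q) = norm (R *\<^sub>R (fst p - fst q))"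
        by (simp add: dist_norm algebra_simps)
      also have "\<dots> = R * dist (fst p) (fst q)" using R by (simp add: dist_norm)
      finally show ?thesis .
    qed
    ultimately have "R * snd p + R * snd q < dist (x + R *\<^sub>R fst p) (x + R *\<^sub>R fst q)"
      by (simp add: algebra_simps)
    then show "cball (fst hp) (snd hp) \<inter> cball (fst hq) (snd hq) = {}"
      unfolding pq h_def by (intro disjoint_cballI) simp
  qed
  have cond: "fst hp \<in> K \<and> fst hp \<in> cball x R \<and> R / T \<le> snd hp \<and> snd hp \<le> R" if hp: "hp \<in> h ` Q" for hp
  proof -
    obtain p where p: "p \<in> Q" "hp = h p" using hp by blast
    obtain y where y: "y \<in> K" "fst p = (1/R) *\<^sub>R (y - x)" "norm (fst p) \<le> 1"
      using Q(3)[OF p(1)] by auto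
    have "x + R *\<^sub>R fst p = y" using y(2) R by simp
    moreover have "dist x (x + R *\<^sub>R fst p) \<le> R"
    proof -
      have "dist x (x + R *\<^sub>R fst p) = R * norm (fst p)" using R by (simp add: dist_norm)
      also have "\<dots> \<le> R * 1" using y(3) R by (intro mult_left_mono) auto
      finally show ?thesis by simp
    qed
    moreover have "R / T \<le> R * snd p"
    proof -
      have "R * (1/T) \<le> R * snd p" using Q(3)[OF p(1)] R by (intro mult_left_mono) auto
      then show ?thesis by simp
    qed
    moreover have "R * snd p \<le> R" using Q(3)[OF p(1)] R by (simp add: mult_le_cancel_left1)
    ultimately show ?thesis using y(1) p(2) by (simp add: h_def)
  qed
  have "\<not> (\<Sum>q\<in>h ` Q. (snd q / R) powr b) > 4 powr b"
    using nr fin pd cond unfolding rich_def by blast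
  hence "(\<Sum>q\<in>h ` Q. (snd q / R) powr b) \<le> 4 powr b" by simp
  moreover have "(\<Sum>q\<in>h ` Q. (snd q / R) powr b) = (\<Sum>p\<in>Q. snd p powr b)"
  proof -
    have "(\<Sum>q\<in>h ` Q. (snd q / R) powr b) = (\<Sum>p\<in>Q. (snd (h p) / R) powr b)"
      by (rule sum.reindex[OF inj, unfolded comp_def])
    also have "\<dots> = (\<Sum>p\<in>Q. snd p powr b)" using R by (simp add: h_def)
    finally show ?thesis .
  qed
  ultimately show ?thesis by simp
qed



lemma transfer:
  fixes B :: "nat \<Rightarrow> 'a::euclidean_space set" and F :: "'a set"
  assumes hd: "(\<lambda>n. hausdorff_dist (B n) F) \<longlonglongrightarrow> 0"
    and cB: "\<And>n. compact (B n)" and neB: "\<And>n. B n \<noteq> {}" and sB: "\<And>n. B n \<subseteq> cball 0 1"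
    and neF: "F \<noteq> {}" and sF: "F \<subseteq> cball 0 1"
    and poorB: "\<And>n Q. finite Q \<Longrightarrow> pdisj Q \<Longrightarrow> (\<forall>p\<in>Q. fst p \<in> B n \<and> t n \<le> snd p \<and> snd p \<le> 1)
        \<Longrightarrow> (\<Sum>p\<in>Q. snd p powr b) \<le> 4 powr b"
    and t: "t \<longlonglongrightarrow> 0"
    and P: "finite P" "pdisj P" "\<And>p. p \<in> P \<Longrightarrow> fst p \<in> F \<and> 0 < snd p \<and> snd p \<le> 1"
  shows "(\<Sum>p\<in>P. snd p powr b) \<le> 4 powr b"
proof (cases "P = {}")
  case True then show ?thesis by simp
next
  case False
  define G where "G = (\<lambda>(p,q). dist (fst p) (fst q) - snd p - snd q) ` {(p,q). p \<in> P \<and> q \<in> P \<and> p \<noteq> q}"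
  have finG: "finite G"
  proof -
    have "{(p,q). p \<in> P \<and> q \<in> P \<and> p \<noteq> q} \<subseteq> P \<times> P" by auto
    then have "finite {(p,q). p \<in> P \<and> q \<in> P \<and> p \<noteq> q}" using P(1) finite_subset by blast
    then show ?thesis by (simp add: G_def)
  qed
  have Gpos: "\<forall>g\<in>G. 0 < g"
  proof
    fix g assume "g \<in> G"
    then obtain p q where pq: "p \<in> P" "q \<in> P" "p \<noteq> q" "g = dist (fst p) (fst q) - snd p - snd q"
      by (auto simp: G_def)
    have "cball (fst p) (snd p) \<inter> cball (fst q) (snd q) = {}" using P(2) pq unfolding pdisj_def by blast
    then have "snd p + snd q < dist (fst p) (fst q)"
      using cball_disj_iff[of "snd p" "snd q" "fst p" "fst q"] P(3)[OF pq(1)] P(3)[OF pq(2)] by simp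
    then show "0 < g" using pq(4) by simp
  qed
  define \<epsilon> where "\<epsilon> = Min (insert 1 G) / 4"
  have \<epsilon>: "0 < \<epsilon>" using finG Gpos by (simp add: \<epsilon>_def)
  have gap: "snd p + snd q + 2 * \<epsilon> < dist (fst p) (fst q)" if "p \<in> P" "q \<in> P" "p \<noteq> q" for p q
  proof -
    have "dist (fst p) (fst q) - snd p - snd q \<in> insert 1 G" using that by (auto simp: G_def)
    then have "Min (insert 1 G) \<le> dist (fst p) (fst q) - snd p - snd q" using finG by simp
    then show ?thesis using \<epsilon> by (simp add: \<epsilon>_def)
  qed
  define m0 where "m0 = Min (snd ` P)"
  have m0: "0 < m0" using P False by (simp add: m0_def)
  have m0le: "m0 \<le> snd p" if "p \<in> P" for p using P(1) that by (simp add: m0_def)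
  have "eventually (\<lambda>n. hausdorff_dist (B n) F < \<epsilon>) sequentially"
    using order_tendstoD(2)[OF hd \<epsilon>] .
  moreover have "eventually (\<lambda>n. t n < m0) sequentially"
    using order_tendstoD(2)[OF t m0] .
  ultimately have "eventually (\<lambda>n. hausdorff_dist (B n) F < \<epsilon> \<and> t n < m0) sequentially"
    by (rule eventually_conj)
  then obtain N where N: "\<And>n. n \<ge> N \<Longrightarrow> hausdorff_dist (B n) F < \<epsilon> \<and> t n < m0"
    unfolding eventually_sequentially by blast
  define n where "n = N"
  have n: "hausdorff_dist (B n) F < \<epsilon>" "t n < m0" using N[of N] by (auto simp: n_def)
  have near: "\<exists>a\<in>B n. dist (fst p) a < \<epsilon>" if p: "p \<in> P" for p
  proof -
    have yF: "fst p \<in> F" using P(3)[OF p] by simp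
    have bdd: "bdd_above ((\<lambda>y. infdist y (B n)) ` F)"
    proof (rule bdd_aboveI)
      fix z assume "z \<in> (\<lambda>y. infdist y (B n)) ` F"
      then obtain y where y: "y \<in> F" "z = infdist y (B n)" by blast
      obtain a0 where a0: "a0 \<in> B n" using neB by blast
      have "infdist y (B n) \<le> dist y a0" by (rule infdist_le[OF a0])
      also have "\<dots> \<le> norm y + norm a0" by (simp add: dist_norm norm_triangle_ineq4)
      also have "\<dots> \<le> 2"
      proof -
        have "norm y \<le> 1" using y(1) sF by auto
        moreover have "norm a0 \<le> 1" using a0 sB[of n] by auto
        ultimately show ?thesis by simp
      qed
      finally show "z \<le> 2" using y by simp
    qed
    have "infdist (fst p) (B n) \<le> (SUP y\<in>F. infdist y (B n))" using cSUP_upper[OF yF bdd] .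
    also have "\<dots> \<le> hausdorff_dist (B n) F" unfolding hausdorff_dist_def by simp
    finally have "infdist (fst p) (B n) < \<epsilon>" using n(1) by simp
    moreover obtain a where "a \<in> B n" "infdist (fst p) (B n) = dist (fst p) a"
      using infdist_attains_inf[of "B n" "fst p"] cB neB compact_imp_closed by blast
    ultimately show ?thesis by auto
  qed
  then obtain a where a: "\<And>p. p \<in> P \<Longrightarrow> a p \<in> B n \<and> dist (fst p) (a p) < \<epsilon>" by metis
  define h where "h p = (a p, snd p)" for p
  have farther: "snd p + snd q < dist (a p) (a q)" if pq: "p \<in> P" "q \<in> P" "p \<noteq> q" for p q
  proof -
    have "dist (fst p) (fst q) \<le> dist (fst p) (a p) + dist (a p) (a q) + dist (a q) (fst q)"
      using dist_triangle[of "fst p" "fst q" "a p"] dist_triangle[of "a p" "fst q" "a q"] by linarith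
    moreover have "dist (a q) (fst q) < \<epsilon>" using a[OF pq(2)] by (simp add: dist_commute)
    ultimately show ?thesis using gap[OF pq] a[OF pq(1)] by linarith
  qed
  have inj: "inj_on h P"
  proof (rule inj_onI)
    fix p q assume pq: "p \<in> P" "q \<in> P" "h p = h q"
    show "p = q"
    proof (rule ccontr)
      assume "p \<noteq> q"
      then have "snd p + snd q < dist (a p) (a q)" using farther pq by blast
      moreover have "a p = a q" using pq(3) by (simp add: h_def)
      ultimately show False using P(3)[OF pq(1)] P(3)[OF pq(2)] by simp
    qed
  qed
  have "(\<Sum>q\<in>h ` P. snd q powr b) \<le> 4 powr b"
  proof (rule poorB)
    show "finite (h ` P)" using P(1) by simp
    show "pdisj (h ` P)"
      unfolding pdisj_def
    proof (intro ballI impI)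
      fix hp hq assume hh: "hp \<in> h ` P" "hq \<in> h ` P" "hp \<noteq> hq"
      then obtain p q where pq: "p \<in> P" "q \<in> P" "hp = h p" "hq = h q" by blast
      then have "p \<noteq> q" using hh by auto
      then have "snd p + snd q < dist (a p) (a q)" using farther pq by blast
      then show "cball (fst hp) (snd hp) \<inter> cball (fst hq) (snd hq) = {}"
        unfolding pq h_def by (intro disjoint_cballI) simp
    qed
    show "\<forall>q\<in>h ` P. fst q \<in> B n \<and> t n \<le> snd q \<and> snd q \<le> 1"
    proof
      fix hp assume "hp \<in> h ` P"
      then obtain p where p: "p \<in> P" "hp = h p" by blast
      then show "fst hp \<in> B n \<and> t n \<le> snd hp \<and> snd hp \<le> 1"
        using a[OF p(1)] P(3)[OF p(1)] m0le[OF p(1)] n(2) by (simp add: h_def)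
    qed
  qed
  moreover have "(\<Sum>q\<in>h ` P. snd q powr b) = (\<Sum>p\<in>P. snd p powr b)"
  proof -
    have "(\<Sum>q\<in>h ` P. snd q powr b) = (\<Sum>p\<in>P. snd (h p) powr b)"
      by (rule sum.reindex[OF inj, unfolded comp_def])
    also have "\<dots> = (\<Sum>p\<in>P. snd p powr b)" by (simp add: h_def)
    finally show ?thesis .
  qed
  ultimately show ?thesis by simp
qed




lemma packing_sums_mono:
  "\<delta>1 \<le> \<delta>2 \<Longrightarrow> packing_sums s \<delta>1 E \<subseteq> packing_sums s \<delta>2 E"
  unfolding packing_sums_def by fastforce

lemma premeasure_is_Inf:
  fixes E :: "'a::euclidean_space set"
  shows "packing_premeasure s E = (INF \<delta>\<in>{0<..}. Sup (packing_sums s \<delta> E))"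
proof -
  define \<phi> where "\<phi> \<delta> = Sup (packing_sums s \<delta> E)" for \<delta>
  define l where "l = (INF \<delta>\<in>{0<..}. \<phi> \<delta>)"
  have mono: "\<phi> \<delta>1 \<le> \<phi> \<delta>2" if "\<delta>1 \<le> \<delta>2" for \<delta>1 \<delta>2
    unfolding \<phi>_def using packing_sums_mono[OF that] by (rule Sup_subset_mono)
  have "(\<phi> \<longlongrightarrow> l) (at_right 0)"
  proof (rule decreasing_tendsto)
    show "\<forall>\<^sub>F \<delta> in at_right 0. l \<le> \<phi> \<delta>"
      using eventually_at_right_less[of "0::real"]
      by eventually_elim (auto simp: l_def intro: INF_lower)
    fix x assume "l < x"
    then obtain \<delta>0 where d0: "\<delta>0 \<in> {0<..}" "\<phi> \<delta>0 < x" unfolding l_def by (auto simp: INF_less_iff)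
    have "\<forall>\<^sub>F \<delta> in at_right 0. \<delta> \<in> {0<..<\<delta>0}"
      using d0(1) by (intro eventually_at_right_real) auto
    then show "\<forall>\<^sub>F \<delta> in at_right 0. \<phi> \<delta> < x"
    proof eventually_elim
      case (elim \<delta>)
      then have "\<phi> \<delta> \<le> \<phi> \<delta>0" by (intro mono) auto
      then show ?case using d0(2) by simp
    qed
  qed
  then have "Lim (at_right 0) \<phi> = l" by (intro tendsto_Lim) auto
  then show ?thesis unfolding packing_premeasure_def \<phi>_def l_def .
qed

lemma premeasure_bound:
  fixes F :: "'a::euclidean_space set"
  assumes b: "0 \<le> b"
    and pack: "\<And>P. finite P \<Longrightarrow> pdisj P \<Longrightarrow> (\<forall>p\<in>P. fst p \<in> F \<and> 0 < snd p \<and> snd p \<le> 1)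
       \<Longrightarrow> (\<Sum>p\<in>P. snd p powr b) \<le> 4 powr b"
  shows "packing_premeasure b F \<le> ennreal (8 powr b)"
proof -
  have "Sup (packing_sums b 1 F) \<le> ennreal (8 powr b)"
  proof (rule Sup_least)
    fix z assume "z \<in> packing_sums b 1 F"
    then obtain P where z: "z = (\<Sum>\<^sub>\<infinity>p\<in>P. ennreal ((2 * snd p) powr b))"
      and P: "\<forall>p\<in>P. fst p \<in> F \<and> 0 < snd p \<and> snd p \<le> 1"
      "\<forall>p\<in>P. \<forall>q\<in>P. p \<noteq> q \<longrightarrow> cball (fst p) (snd p) \<inter> cball (fst q) (snd q) = {}"
      unfolding packing_sums_def by blast
    have "(\<Sum>\<^sub>\<infinity>p\<in>P. ennreal ((2 * snd p) powr b)) \<le> ennreal (8 powr b)"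
    proof (rule infsum_le_finite_sums)
      show "(\<lambda>p. ennreal ((2 * snd p) powr b)) summable_on P"
        by (rule nonneg_summable_on_complete) simp
      fix P' assume P': "finite P'" "P' \<subseteq> P"
      have pd: "pdisj P'" using P(2) P'(2) unfolding pdisj_def by blast
      have c: "\<forall>p\<in>P'. fst p \<in> F \<and> 0 < snd p \<and> snd p \<le> 1" using P(1) P'(2) by blast
      have "(\<Sum>p\<in>P'. ennreal ((2 * snd p) powr b)) = ennreal (\<Sum>p\<in>P'. (2 * snd p) powr b)"
        by (rule sum_ennreal) simp
      also have "(\<Sum>p\<in>P'. (2 * snd p) powr b) = 2 powr b * (\<Sum>p\<in>P'. snd p powr b)"
        by (simp add: powr_mult sum_distrib_left)
      also have "\<dots> \<le> 2 powr b * 4 powr b"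
        using pack[OF P'(1) pd c] by (intro mult_left_mono) auto
      also have "\<dots> = 8 powr b" by (simp flip: powr_mult)
      finally show "(\<Sum>p\<in>P'. ennreal ((2 * snd p) powr b)) \<le> ennreal (8 powr b)"
        by (simp add: ennreal_leI)
    qed
    then show "z \<le> ennreal (8 powr b)" using z by simp
  qed
  moreover have "packing_premeasure b F \<le> Sup (packing_sums b 1 F)"
    unfolding premeasure_is_Inf by (rule INF_lower) simp
  ultimately show ?thesis by simp
qed

lemma premeasure_empty: "packing_premeasure s ({} :: 'a::euclidean_space set) = 0"
proof -
  have "packing_sums s \<delta> ({} :: 'a set) = {0}" for \<delta>
  proof
    show "packing_sums s \<delta> ({} :: 'a set) \<subseteq> {0}"
    proof
      fix z assume "z \<in> packing_sums s \<delta> ({} :: 'a set)"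
      then obtain P :: "('a \<times> real) set" where z: "z = (\<Sum>\<^sub>\<infinity>p\<in>P. ennreal ((2 * snd p) powr s))"
        and P: "\<forall>p\<in>P. fst p \<in> ({} :: 'a set) \<and> 0 < snd p \<and> snd p \<le> \<delta>"
        unfolding packing_sums_def by blast
      have "P = {}" using P by blast
      then show "z \<in> {0}" using z by simp
    qed
    have "(\<Sum>\<^sub>\<infinity>p\<in>({} :: ('a \<times> real) set). ennreal ((2 * snd p) powr s)) \<in> packing_sums s \<delta> ({} :: 'a set)"
      unfolding packing_sums_def by blast
    then show "{0} \<subseteq> packing_sums s \<delta> ({} :: 'a set)" by simp
  qed
  then show ?thesis unfolding premeasure_is_Inf by simp
qed

lemma measure_le_premeasure:
  fixes F :: "'a::euclidean_space set"
  shows "packing_measure s F \<le> packing_premeasure s F"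
proof -
  define Es where "Es i = (if i = 0 then F else {})" for i :: nat
  have "F \<subseteq> (\<Union>i. Es i)" by (auto simp: Es_def)
  have eq: "(\<lambda>i. packing_premeasure s (Es i)) = (\<lambda>i. if i = 0 then packing_premeasure s F else 0)"
    by (auto simp: Es_def premeasure_empty)
  have "(\<Sum>i. packing_premeasure s (Es i)) = packing_premeasure s F"
    unfolding eq using sums_single[of 0 "\<lambda>_. packing_premeasure s F"] sums_unique by fastforce
  then have "(\<Sum>i. packing_premeasure s (Es i)) \<in> {(\<Sum>i. packing_premeasure s (Es i)) | Es :: nat \<Rightarrow> 'a set.
      F \<subseteq> (\<Union>i. Es i)}" using \<open>F \<subseteq> (\<Union>i. Es i)\<close> by blast
  then have "packing_measure s F \<le> (\<Sum>i. packing_premeasure s (Es i))"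
    unfolding packing_measure_def by (rule Inf_lower)
  then show ?thesis using \<open>(\<Sum>i. packing_premeasure s (Es i)) = packing_premeasure s F\<close> by simp
qed



theorem theorem3p8:
  fixes K :: "'a::euclidean_space set"
  assumes "K \<noteq> {}" and "compact K"
  shows "\<exists>F\<in>weak_tangents K.
           packing_premeasure (lower_dim K) F \<le> ennreal (257 powr (lower_dim K))
         \<and> packing_measure (lower_dim K) F < \<infinity>"
proof -
  have K: "compact K" "K \<noteq> {}" using assms by auto
  define b where "b = lower_dim K"
  have b0: "0 \<le> b" unfolding b_def by (rule lower_dim_nonneg[OF K])
  have "\<forall>n::nat. \<exists>y. y \<in> K \<and> (\<exists>u. 0 < u \<and> u < 1 / (real n + 1) \<and> \<not> rich K b (real n + 1) y u)"
  proof
    fix n :: nat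
    have "\<exists>y\<in>K. \<exists>u. 0 < u \<and> u < 1 / (real n + 1) \<and> \<not> rich K (lower_dim K) (real n + 1) y u"
      by (rule poor_exists[OF K]) auto
    then show "\<exists>y. y \<in> K \<and> (\<exists>u. 0 < u \<and> u < 1 / (real n + 1) \<and> \<not> rich K b (real n + 1) y u)"
      unfolding b_def by blast
  qed
  then obtain x R where xR: "\<And>n. x n \<in> K" "\<And>n. 0 < R n" "\<And>n. R n < 1 / (real n + 1)"
    "\<And>n. \<not> rich K b (real n + 1) (x n) (R n)"
    by metis
  define A where "A n = (\<lambda>y. (1 / R n) *\<^sub>R (y - x n)) ` K \<inter> cball 0 1" for n
  have cA: "compact (A n)" for n
  proof -
    have "compact ((\<lambda>y. (1 / R n) *\<^sub>R (y - x n)) ` K)"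
      by (rule compact_continuous_image[OF _ K(1)]) (intro continuous_intros)
    then show ?thesis unfolding A_def by (rule compact_Int_closed) simp
  qed
  have zA: "0 \<in> A n" for n
  proof -
    have "(1 / R n) *\<^sub>R (x n - x n) = 0" by simp
    then show ?thesis unfolding A_def using xR(1)[of n] by force
  qed
  have neA: "A n \<noteq> {}" for n using zA by blast
  have sA: "A n \<subseteq> cball 0 1" for n by (simp add: A_def)
  obtain k F where k: "strict_mono k" and cF: "compact F" and neF: "F \<noteq> {}" and sF: "F \<subseteq> cball 0 1"
    and lim: "(\<lambda>n. hausdorff_dist (A (k n)) F) \<longlonglongrightarrow> 0"
    using blaschke[of A, OF cA neA sA] by blast
  define lam where "lam n = 1 / R (k n)" for n
  define x' where "x' n = x (k n)" for n
  have lamge: "real n + 1 \<le> lam n" for n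
  proof -
    have "R (k n) < 1 / (real (k n) + 1)" by (rule xR(3))
    hence "real (k n) + 1 < 1 / R (k n)" using xR(2)[of "k n"]
      by (simp add: field_simps)
    moreover have "n \<le> k n" using seq_suble[OF k] .
    ultimately show ?thesis unfolding lam_def by simp
  qed
  have tang: "F \<in> weak_tangents K"
    unfolding weak_tangents_def
  proof (intro CollectI conjI exI[of _ x'] exI[of _ lam])
    show "compact F" by fact
    show "F \<noteq> {}" by fact
    show "\<forall>n. x' n \<in> K \<and> 1 \<le> lam n \<and> (\<lambda>y. lam n *\<^sub>R (y - x' n)) ` K \<inter> cball 0 1 \<noteq> {}"
    proof
      fix n
      have "(\<lambda>y. lam n *\<^sub>R (y - x' n)) ` K \<inter> cball 0 1 = A (k n)"
        by (simp add: A_def lam_def x'_def)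
      moreover have "1 \<le> lam n" using lamge[of n] by simp
      ultimately show "x' n \<in> K \<and> 1 \<le> lam n \<and> (\<lambda>y. lam n *\<^sub>R (y - x' n)) ` K \<inter> cball 0 1 \<noteq> {}"
        using xR(1) neA by (simp add: x'_def)
    qed
    show "filterlim lam at_top sequentially"
    proof (rule filterlim_at_top_mono[OF filterlim_real_sequentially])
      have "\<forall>n. real n \<le> lam n" using lamge by (metis add_increasing2 zero_le_one order_trans le_add_same_cancel1)
      then show "\<forall>\<^sub>F n in sequentially. real n \<le> lam n" by (rule always_eventually)
    qed
    have "(\<lambda>y. lam n *\<^sub>R (y - x' n)) ` K \<inter> cball 0 1 = A (k n)" for n
      by (simp add: A_def lam_def x'_def)
    then show "(\<lambda>n. hausdorff_dist ((\<lambda>y. lam n *\<^sub>R (y - x' n)) ` K \<inter> cball 0 1) F) \<longlonglongrightarrow> 0"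
      using lim by simp
  qed
  define t where "t n = 1 / (real (k n) + 1)" for n
  have t: "t \<longlonglongrightarrow> 0"
  proof -
    have "(\<lambda>n. inverse (real (Suc n))) \<longlonglongrightarrow> 0" by (rule LIMSEQ_inverse_real_of_nat)
    hence "((\<lambda>n. inverse (real (Suc n))) \<circ> k) \<longlonglongrightarrow> 0" by (rule LIMSEQ_subseq_LIMSEQ[OF _ k])
    moreover have "(\<lambda>n. inverse (real (Suc n))) \<circ> k = t"
      by (rule ext) (simp add: t_def o_def inverse_eq_divide)
    ultimately show ?thesis by simp
  qed
  have pack: "(\<Sum>p\<in>P. snd p powr b) \<le> 4 powr b"
    if P: "finite P" "pdisj P" "\<forall>p\<in>P. fst p \<in> F \<and> 0 < snd p \<and> snd p \<le> 1" for P
  proof (rule transfer[of "\<lambda>n. A (k n)" F t b P])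
    show "(\<lambda>n. hausdorff_dist (A (k n)) F) \<longlonglongrightarrow> 0" by (rule lim)
    show "compact (A (k n))" for n by (rule cA)
    show "A (k n) \<noteq> {}" for n by (rule neA)
    show "A (k n) \<subseteq> cball 0 1" for n by (rule sA)
    show "F \<noteq> {}" by fact
    show "F \<subseteq> cball 0 1" by fact
    show "t \<longlonglongrightarrow> 0" by (rule t)
    show "finite P" "pdisj P" by (rule P(1), rule P(2))
    show "\<And>p. p \<in> P \<Longrightarrow> fst p \<in> F \<and> 0 < snd p \<and> snd p \<le> 1" using P(3) by blast
    fix n Q assume Q: "finite Q" "pdisj Q" "\<forall>p\<in>Q. fst p \<in> A (k n) \<and> t n \<le> snd p \<and> snd p \<le> 1"
    show "(\<Sum>p\<in>Q. snd p powr b) \<le> 4 powr b"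
    proof (rule poor_scaled[OF xR(4)[of "k n"] xR(2)[of "k n"] _ Q(1,2)])
      show "0 < real (k n) + 1" by simp
      fix p assume "p \<in> Q"
      then show "fst p \<in> (\<lambda>y. (1 / R (k n)) *\<^sub>R (y - x (k n))) ` K \<inter> cball 0 1 \<and>
          1 / (real (k n) + 1) \<le> snd p \<and> snd p \<le> 1"
        using Q(3) by (simp add: A_def t_def)
    qed
  qed
  have pre: "packing_premeasure b F \<le> ennreal (8 powr b)"
    by (rule premeasure_bound[OF b0]) (use pack in blast)
  also have "\<dots> \<le> ennreal (257 powr b)"
    using b0 by (intro ennreal_leI powr_mono2) auto
  finally have pre2: "packing_premeasure b F \<le> ennreal (257 powr b)" .
  have "packing_measure b F \<le> packing_premeasure b F" by (rule measure_le_premeasure)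
  also have "\<dots> < \<infinity>" using pre2 by (simp add: le_less_trans)
  finally have "packing_measure b F < \<infinity>" .
  with pre2 tang show ?thesis unfolding b_def by blast
qed


end
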